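(* Let $n,N\ge1$ and positive integers $r_1,\dots,r_N,r$ with $r_i\le r\le\lfloor(n-1)/2\rfloor$. Consider either (a) $d=n$, $p=r_i+1$, $q=n-r_i$ for some $i$, and $\mathcal{A}(y)=\mathcal{H}_{r_i+1}(y)$ for $y\in\mathbb{R}^n$; or (b) $d=Nn$, $p=r+1$, $q=N(n-r)$, and $\mathcal{A}(y)=[\mathcal{H}_{r+1}(y_1)\cdots\mathcal{H}_{r+1}(y_N)]$ for $y=(y_1^\top,\dots,y_N^\top)^\top\in\mathbb{R}^{Nn}$. Then for any $U\in\mathbb{R}^{1\times q}$ and any $R\in\mathbb{R}^{1\times p}\setminus\{0\}$, if $\mathcal{A}^*(R^\top U)=0$ then $U=0$.
   Context: For $x\in\mathbb{R}^n$ and $1\le l\le n$, $\mathcal{H}_l(x)\in\mathbb{R}^{l\times(n-l+1)}$ is the Hankel matrix with $(i,j)$ entry $x(i+j-1)$. $\mathcal{A}^*:\mathbb{R}^{p\times q}\to\mathbb{R}^d$ is the adjoint of the linear map $\mathcal{A}:\mathbb{R}^d\to\mathbb{R}^{p\times q}$ with respect to the standard (Frobenius) inner products. *)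

theory Defs
  imports Complex_Main
begin

text \<open>Conventions: vectors in R^d are functions nat => real, only the entries with
index < d being relevant; p x q matrices are functions nat => nat => real, only entries
(i,j) with i < p, j < q being relevant. Indices are 0-based, so the 1-based paper entry
x(i+j-1) becomes x (i+j).\<close>

definition hankel :: "nat \<Rightarrow> (nat \<Rightarrow> real) \<Rightarrow> nat \<Rightarrow> nat \<Rightarrow> real" where
  "hankel l x = (\<lambda>i j. x (i + j))"
  \<comment> \<open>H_l(x) for x in R^n is the l x (n-l+1) matrix with entries x(i+j) (0-based).\<close>

definition frob :: "nat \<Rightarrow> nat \<Rightarrow> (nat \<Rightarrow> nat \<Rightarrow> real) \<Rightarrow> (nat \<Rightarrow> nat \<Rightarrow> real) \<Rightarrow> real" where
  "frob p q M M' = (\<Sum>i<p. \<Sum>j<q. M i j * M' i j)"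

definition std_basis :: "nat \<Rightarrow> nat \<Rightarrow> real" where
  "std_basis k = (\<lambda>t. if t = k then 1 else 0)"

definition adjoint :: "nat \<Rightarrow> nat \<Rightarrow> ((nat \<Rightarrow> real) \<Rightarrow> (nat \<Rightarrow> nat \<Rightarrow> real))
    \<Rightarrow> (nat \<Rightarrow> nat \<Rightarrow> real) \<Rightarrow> nat \<Rightarrow> real" where
  "adjoint p q A M = (\<lambda>k. frob p q (A (std_basis k)) M)"

text \<open>Case (b): y in R^(N n) is split into blocks y_b(t) = y(b n + t), b < N, and
A(y) = [H_(r+1)(y_1) ... H_(r+1)(y_N)] of size (r+1) x N(n-r).\<close>
definition block_hankel :: "nat \<Rightarrow> nat \<Rightarrow> (nat \<Rightarrow> real) \<Rightarrow> nat \<Rightarrow> nat \<Rightarrow> real" where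
  "block_hankel n r y = (\<lambda>i j. hankel (r + 1) (\<lambda>t. y ((j div (n - r)) * n + t)) i (j mod (n - r)))"

definition outer :: "(nat \<Rightarrow> real) \<Rightarrow> (nat \<Rightarrow> real) \<Rightarrow> nat \<Rightarrow> nat \<Rightarrow> real" where
  "outer R U = (\<lambda>i j. R i * U j)"

end

theory Submission imports Defs begin
lemma inner_delta:
  "(\<Sum>c<(q::nat). if (i::nat) + c = t then R i * (V c::real) else 0) = (if i \<le> t \<and> t - i < q then R i * V (t - i) else 0)"
proof -
  have "(\<Sum>c<q. if i + c = t then R i * V c else 0) = (\<Sum>c<q. if c = t - i \<and> i \<le> t then R i * V c else 0)"
  proof (rule sum.cong)
    fix c
    have "(i + c = t) = (c = t - i \<and> i \<le> t)" by auto
    then show "(if i + c = t then R i * V c else 0) = (if c = t - i \<and> i \<le> t then R i * V c else 0)"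
      by simp
  qed simp
  also have "\<dots> = (if i \<le> t \<and> t - i < q then R i * V (t - i) else 0)"
    by (cases "i \<le> t") (auto simp: sum.delta')
  finally show ?thesis .
qed

lemma conv_zero:
  fixes R V :: "nat \<Rightarrow> real"
  assumes a0: "a0 < p" "R a0 \<noteq> 0" "\<forall>i<a0. R i = 0"
    and H: "\<forall>t < p + q - 1. (\<Sum>i<p. \<Sum>c<q. if i + c = t then R i * V c else 0) = 0"
  shows "\<forall>j<q. V j = 0"
proof (intro allI impI)
  fix j assume "j < q"
  then show "V j = 0"
  proof (induction j rule: less_induct)
    case (less j)
    let ?t = "a0 + j"
    let ?f = "\<lambda>i. (if i \<le> ?t \<and> ?t - i < q then R i * V (?t - i) else 0)"
    have "?t < p + q - 1" using less.prems a0(1) by linarith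
    then have "(\<Sum>i<p. ?f i) = 0"
      using H by (simp add: inner_delta)
    moreover have "(\<Sum>i<p. ?f i) = ?f a0 + (\<Sum>i\<in>{..<p} - {a0}. ?f i)"
      using a0(1) by (simp add: sum.remove)
    moreover have "(\<Sum>i\<in>{..<p} - {a0}. ?f i) = 0"
    proof (rule sum.neutral, rule ballI)
      fix i assume i: "i \<in> {..<p} - {a0}"
      show "?f i = 0"
      proof (cases "i < a0")
        case True then show ?thesis using a0(3) by simp
      next
        case False
        then have "i > a0" using i by auto
        show ?thesis
        proof (cases "i \<le> ?t")
          case True
          have "?t - i < j" using \<open>i > a0\<close> True by linarith
          then show ?thesis using less.IH[of "?t - i"] less.prems by auto
        qed simp
      qed
    qed
    ultimately have "R a0 * V j = 0" using less.prems by simp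
    then show ?case using a0(2) by simp
  qed
qed
lemma block_sum:
  fixes g :: "nat \<Rightarrow> real" and m N :: nat
  shows "(\<Sum>j<N*m. g j) = (\<Sum>b<N. \<Sum>c<m. g (b*m+c))"
proof (induction N)
  case 0 then show ?case by simp
next
  case (Suc N)
  have "(\<Sum>j<Suc N*m. g j) = (\<Sum>j<N*m. g j) + (\<Sum>j=N*m..<N*m+m. g j)"
    by (simp add: add.commute lessThan_atLeast0 sum.atLeastLessThan_concat)
  also have "(\<Sum>j=N*m..<N*m+m. g j) = (\<Sum>c<m. g (N*m+c))"
    using sum.shift_bounds_nat_ivl[of g 0 "N*m" m]
    by (simp add: lessThan_atLeast0 add.commute)
  finally show ?case using Suc by simp
qed

lemma blk_eq:
  fixes b b' x t n :: nat
  assumes "x < n" "t < n"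
  shows "(b'*n + x = b*n + t) = (b' = b \<and> x = t)"
proof
  assume h: "b'*n + x = b*n + t"
  have "(b'*n + x) div n = b'" "(b*n+t) div n = b" "(b'*n + x) mod n = x" "(b*n+t) mod n = t"
    using assms by simp_all
  then show "b' = b \<and> x = t" using h by metis
qed simp
lemma adj_hankel:
  "adjoint p q (hankel p) (outer R U) k = (\<Sum>i<p. \<Sum>c<q. if i + c = k then R i * U c else 0)"
  unfolding adjoint_def frob_def hankel_def std_basis_def outer_def
  by (intro sum.cong refl) simp

lemma least_nz:
  fixes R :: "nat \<Rightarrow> real"
  assumes "\<exists>a < p. R a \<noteq> 0"
  obtains a0 where "a0 < p" "R a0 \<noteq> 0" "\<forall>i<a0. R i = 0"
proof -
  obtain a where a: "a < p" "R a \<noteq> 0" using assms by blast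
  define a0 where "a0 = (LEAST a. R a \<noteq> 0)"
  have 1: "R a0 \<noteq> 0" unfolding a0_def by (rule LeastI[of _ a]) (rule a(2))
  have "a0 \<le> a" unfolding a0_def by (rule Least_le) (rule a(2))
  then have 2: "a0 < p" using a(1) by simp
  have 3: "\<forall>i<a0. R i = 0"
  proof (intro allI impI)
    fix i assume "i < a0"
    then show "R i = 0" unfolding a0_def using not_less_Least by auto
  qed
  show ?thesis by (rule that[OF 2 1 3])
qed

theorem lemma4p1:
  fixes n N r :: nat and rs :: "nat \<Rightarrow> nat"
  assumes "n \<ge> 1" and "N \<ge> 1" and "r \<ge> 1"
    and "\<forall>i\<in>{1..N}. 1 \<le> rs i \<and> rs i \<le> r"
    and "r \<le> (n - 1) div 2"
  shows "(\<forall>i\<in>{1..N}. \<forall>R U :: nat \<Rightarrow> real.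
            (\<exists>a < rs i + 1. R a \<noteq> 0) \<and>
            (\<forall>k < n. adjoint (rs i + 1) (n - rs i) (hankel (rs i + 1)) (outer R U) k = 0)
            \<longrightarrow> (\<forall>j < n - rs i. U j = 0))
       \<and> (\<forall>R U :: nat \<Rightarrow> real.
            (\<exists>a < r + 1. R a \<noteq> 0) \<and>
            (\<forall>k < N * n. adjoint (r + 1) (N * (n - r)) (block_hankel n r) (outer R U) k = 0)
            \<longrightarrow> (\<forall>j < N * (n - r). U j = 0))"
proof (intro conjI ballI allI impI)
  have rn: "r < n" using assms(1,5) by linarith
  {
    fix i R U j
    assume i: "i \<in> {1..N}" and h: "(\<exists>a < rs i + 1. R a \<noteq> (0::real)) \<and>
            (\<forall>k < n. adjoint (rs i + 1) (n - rs i) (hankel (rs i + 1)) (outer R U) k = 0)"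
      and j: "j < n - rs i"
    have rsn: "rs i < n" using assms(4) i rn by force
    obtain a0 where a0: "a0 < rs i + 1" "R a0 \<noteq> 0" "\<forall>i<a0. R i = 0"
      using h least_nz by blast
    have "\<forall>j<n - rs i. U j = 0"
      by (rule conv_zero[OF a0]) (use h rsn in \<open>simp add: adj_hankel\<close>)
    then show "U j = 0" using j by blast
  }
  {
    fix R U j
    assume h: "(\<exists>a < r + 1. R a \<noteq> (0::real)) \<and>
            (\<forall>k < N * n. adjoint (r + 1) (N * (n - r)) (block_hankel n r) (outer R U) k = 0)"
      and j: "j < N * (n - r)"
    define m where "m = n - r"
    have m: "m > 0" using rn m_def by simp
    obtain a0 where a0: "a0 < r + 1" "R a0 \<noteq> 0" "\<forall>i<a0. R i = 0"
      using h least_nz by blast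
    define b where "b = j div m"
    have b: "b < N" using j m unfolding b_def m_def by (simp add: less_mult_imp_div_less)
    define V where "V = (\<lambda>c. U (b*m + c))"
    have "\<forall>c<m. V c = 0"
    proof (rule conv_zero[OF a0], intro allI impI)
      fix t assume t: "t < r + 1 + m - 1"
      then have tn: "t < n" using m_def rn by simp
      have "b*n + t < N*n"
      proof -
        have "b*n + t < b*n + n" using tn by simp
        also have "\<dots> = Suc b * n" by simp
        also have "\<dots> \<le> N*n" using b by (intro mult_right_mono) auto
        finally show ?thesis .
      qed
      then have z: "adjoint (r + 1) (N * m) (block_hankel n r) (outer R U) (b*n+t) = 0"
        using h m_def by simp
      have "adjoint (r + 1) (N * m) (block_hankel n r) (outer R U) (b*n+t)
        = (\<Sum>i<r+1. \<Sum>j<N*m. if (j div m)*n + (i + j mod m) = b*n+t then R i * U j else 0)"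
        unfolding adjoint_def frob_def block_hankel_def hankel_def std_basis_def outer_def m_def
        by (intro sum.cong refl) (simp add: add.assoc)
      also have "\<dots> = (\<Sum>i<r+1. \<Sum>c<m. if i + c = t then R i * V c else 0)"
      proof (rule sum.cong[OF refl])
        fix i assume i: "i \<in> {..<r+1}"
        have "(\<Sum>j<N*m. if (j div m)*n + (i + j mod m) = b*n+t then R i * U j else 0)
          = (\<Sum>b'<N. \<Sum>c<m. if b' = b \<and> i + c = t then R i * U (b'*m+c) else 0)"
        proof (subst block_sum, intro sum.cong[OF refl])
          fix b' c assume c: "c \<in> {..<m}"
          have "i + c < n" using i c m_def by auto
          then have "(b'*n + (i + c) = b*n + t) = (b' = b \<and> i + c = t)"
            using blk_eq tn by blast
          moreover have "(b'*m+c) div m = b'" "(b'*m+c) mod m = c" using c m by auto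
          ultimately show "(if ((b'*m+c) div m)*n + (i + (b'*m+c) mod m) = b*n+t then R i * U (b'*m+c) else 0)
            = (if b' = b \<and> i + c = t then R i * U (b'*m+c) else 0)" by simp
        qed
        also have "\<dots> = (\<Sum>b'<N. if b' = b then (\<Sum>c<m. if i + c = t then R i * U (b'*m+c) else 0) else 0)"
          by (intro sum.cong[OF refl]) auto
        also have "\<dots> = (\<Sum>c<m. if i + c = t then R i * V c else 0)"
          unfolding V_def using b by (simp add: sum.delta' del: sum.lessThan_Suc)
        finally show "(\<Sum>j<N*m. if (j div m)*n + (i + j mod m) = b*n+t then R i * U j else 0)
          = (\<Sum>c<m. if i + c = t then R i * V c else 0)" .
      qed
      finally show "(\<Sum>i<r+1. \<Sum>c<m. if i + c = t then R i * V c else 0) = 0" using z by simp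
    qed
    moreover have "j mod m < m" using m by simp
    moreover have "j = b*m + j mod m" unfolding b_def by simp
    ultimately show "U j = 0" unfolding V_def by metis
  }
qed

end
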